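(* Let $0<r_1<r_2<r_3$ satisfy \[ r_2(r_3-r_1)^3 - r_1(r_3+r_2)^3 - r_3(r_1+r_2)^3 \ \ge\ 0, \] and let $(i,j)\in\{(1,2),(2,3)\}$. For $\beta\in[0,\pi]$ let $\alpha(\beta)$ be the smallest solution $\alpha\in[\pi,2\pi]$ of $g_{13}(\beta)+g_{ij}(\alpha)=0$ (so $\alpha(0)=\alpha(\pi)=\pi$). Set \[\kappa=\frac{g_{13}'(0)}{-g_{ij}'(\pi)}=\frac{r_1r_3\,(r_i+r_j)^3}{r_ir_j\,(r_3-r_1)^3}.\] Then for every $\beta\in(0,\pi)$, \[ \pi\le\alpha(\beta)<\pi+\kappa\beta .\]
   Context: For $i,j\in\{1,2,3\}$ and $\theta\in\mathbb R$ set $D_{ij}(\theta)=r_i^2+r_j^2-2r_ir_j\cos\theta$ and $g_{ij}(\theta)=\dfrac{r_ir_j\sin\theta}{D_{ij}(\theta)^{3/2}}$. (By the comparison $g_{13}\le g_{ij}$ on $[0,\pi]$, the equation defining $\alpha(\beta)$ has a solution in $[\pi,2\pi]$, and $\kappa$ equals the derivative of $\alpha$ at $0$.) *)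

theory Defs
  imports "HOL-Analysis.Analysis"
begin

text \<open>D_ij(theta) and g_ij(theta), written in terms of the two radii r_i, r_j.\<close>
definition Dfun :: "real \<Rightarrow> real \<Rightarrow> real \<Rightarrow> real" where
  "Dfun ri rj \<theta> = ri^2 + rj^2 - 2 * ri * rj * cos \<theta>"

definition gfun :: "real \<Rightarrow> real \<Rightarrow> real \<Rightarrow> real" where
  "gfun ri rj \<theta> = ri * rj * sin \<theta> / (Dfun ri rj \<theta>) powr (3/2)"

end

theory Submission
  imports Defs
begin

lemma sin_scale:
  fixes k b :: real
  assumes "0 < k" "k < 1" "0 < b" "b \<le> pi"
  shows "k * sin b \<le> sin (k * b)"
proof -
  define x where "x = k * b"
  have x0: "0 < x" and xb: "x < b" using assms by (auto simp: x_def)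
  obtain e where e: "0 < e" "e < x" "sin x - sin 0 = (x - 0) * cos e"
    using MVT2[OF x0, of sin cos] by (auto intro: DERIV_sin)
  obtain z where z: "x < z" "z < b" "sin b - sin x = (b - x) * cos z"
    using MVT2[OF xb, of sin cos] by (auto intro: DERIV_sin)
  have "cos z \<le> cos e" using e z assms by (intro cos_monotone_0_pi_le) auto
  hence "(b - x) * cos z \<le> (b - x) * cos e" using xb by (intro mult_left_mono) auto
  hence "sin b \<le> sin x + (b - x) * cos e" using z by linarith
  hence "x * sin b \<le> x * (sin x + (b - x) * cos e)" using x0 by (intro mult_left_mono) auto
  also have "\<dots> = b * sin x" using e by (simp add: algebra_simps)
  finally have "b * (k * sin b) \<le> b * sin x" by (simp add: x_def algebra_simps)
  thus ?thesis using assms by (simp add: x_def)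
qed

lemma sq_powr: "0 < (y::real) \<Longrightarrow> (y^2) powr (3/2) = y^3"
proof -
  assume y: "0 < y"
  have "(y^2) powr (3/2) = (y powr real 2) powr (3/2)" using y by (simp add: powr_realpow)
  also have "\<dots> = y powr real 3" by (simp add: powr_powr)
  also have "\<dots> = y^3" using y by (simp add: powr_realpow)
  finally show ?thesis .
qed

lemma D_pos:
  assumes "0 < ri" "ri < rj"
  shows "Dfun ri rj t > 0"
proof -
  have "(rj - ri)^2 > 0" using assms by simp
  moreover have "ri * rj * cos t \<le> ri * rj" using assms by (simp add: mult_left_le)
  ultimately show ?thesis unfolding Dfun_def by (simp add: power2_eq_square algebra_simps)
qed

lemma g_cont:
  assumes "0 < ri" "ri < rj"
  shows "continuous_on S (gfun ri rj)"
proof -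
  have "\<And>t. Dfun ri rj t \<noteq> 0" using D_pos[OF assms] by (metis less_irrefl)
  thus ?thesis unfolding gfun_def Dfun_def using D_pos[OF assms, unfolded Dfun_def]
    by (intro continuous_intros) auto
qed

theorem lemma2p5:
  fixes r1 r2 r3 ri rj :: real
  assumes "0 < r1" "r1 < r2" "r2 < r3"
    and "r2 * (r3 - r1)^3 - r1 * (r3 + r2)^3 - r3 * (r1 + r2)^3 \<ge> 0"
    and "(ri, rj) = (r1, r2) \<or> (ri, rj) = (r2, r3)"
    and "0 < \<beta>" "\<beta> < pi"
  shows "\<exists>a. is_arg_min (\<lambda>x. x)
                 (\<lambda>x. x \<in> {pi..2*pi} \<and> gfun r1 r3 \<beta> + gfun ri rj x = 0) a
           \<and> pi \<le> a
           \<and> a < pi + (r1 * r3 * (ri + rj)^3) / (ri * rj * (r3 - r1)^3) * \<beta>"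
proof -
  have ri: "0 < ri" "ri < rj" using assms(1-3,5) by auto
  have r13: "0 < r3 - r1" using assms by simp
  have pos1: "0 < r1 * (r3 + r2)^3" "0 < r3 * (r1 + r2)^3" using assms by auto
  have numle: "r1 * r3 * (ri + rj)^3 < ri * rj * (r3 - r1)^3"
  proof (cases "(ri, rj) = (r1, r2)")
    case True
    have "r3 * (r1 + r2)^3 < r2 * (r3 - r1)^3" using assms(4) pos1 by linarith
    hence "r1 * (r3 * (r1 + r2)^3) < r1 * (r2 * (r3 - r1)^3)" using assms(1) by simp
    thus ?thesis using True by (simp add: algebra_simps)
  next
    case False
    hence T: "ri = r2" "rj = r3" using assms(5) by auto
    have "r1 * (r3 + r2)^3 < r2 * (r3 - r1)^3" using assms(4) pos1 by linarith
    hence "r3 * (r1 * (r3 + r2)^3) < r3 * (r2 * (r3 - r1)^3)" using assms by simp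
    thus ?thesis using T by (simp add: algebra_simps)
  qed
  define K where "K = (r1 * r3 * (ri + rj)^3) / (ri * rj * (r3 - r1)^3)"
  have den: "0 < ri * rj * (r3 - r1)^3" using ri r13 by simp
  have K0: "0 < K" unfolding K_def using den ri assms(1-3) by simp
  have K1: "K < 1" unfolding K_def using den numle by simp
  define t where "t = K * \<beta>"
  have t0: "0 < t" using K0 assms(6) by (auto simp: t_def)
  have tb: "t < \<beta>" using K1 assms(6) by (simp add: t_def)
  have tpi: "t < pi" using tb assms(7) by linarith
  define F where "F = (\<lambda>x. gfun r1 r3 \<beta> + gfun ri rj x)"
  have sb: "sin \<beta> > 0" using assms(6,7) by (simp add: sin_gt_zero)
  have st: "sin t > 0" using t0 tpi by (simp add: sin_gt_zero)
  have cb: "cos \<beta> < 1" using assms(6,7) by (metis cos_monotone_0_pi cos_zero less_eq_real_def)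
  have D13: "Dfun r1 r3 \<beta> > (r3 - r1)^2"
  proof -
    have "r1 * r3 * cos \<beta> < r1 * r3" using cb assms by simp
    thus ?thesis unfolding Dfun_def by (simp add: power2_eq_square algebra_simps)
  qed
  have "(r3 - r1)^3 = ((r3 - r1)^2) powr (3/2)"
    using sq_powr[OF r13] by simp
  also have "\<dots> < Dfun r1 r3 \<beta> powr (3/2)" using D13 by (intro powr_less_mono2) auto
  finally have P13: "(r3 - r1)^3 < Dfun r1 r3 \<beta> powr (3/2)" .
  have g13: "gfun r1 r3 \<beta> < r1 * r3 * sin \<beta> / (r3 - r1)^3"
  proof -
    have p: "0 < (r3 - r1)^3" using r13 by simp
    hence "0 < Dfun r1 r3 \<beta> powr (3/2) * (r3 - r1)^3" using P13 by (intro mult_pos_pos) auto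
    thus ?thesis unfolding gfun_def using P13 p sb assms(1-3)
      by (intro divide_strict_left_mono) auto
  qed
  have g13pos: "gfun r1 r3 \<beta> > 0"
    unfolding gfun_def using D_pos[of r1 r3 \<beta>] sb assms(1-3) by simp
  have Dij: "Dfun ri rj (pi + t) \<le> (ri + rj)^2"
  proof -
    have "ri * rj * cos t \<le> ri * rj * 1" using ri by (intro mult_left_mono) auto
    thus ?thesis unfolding Dfun_def by (simp add: power2_eq_square algebra_simps)
  qed
  have "Dfun ri rj (pi + t) powr (3/2) \<le> ((ri + rj)^2) powr (3/2)"
    using Dij D_pos[OF ri, of "pi + t"] by (intro powr_mono2) auto
  also have "\<dots> = (ri + rj)^3"
    using sq_powr[of "ri+rj"] ri by simp
  finally have Pij: "Dfun ri rj (pi + t) powr (3/2) \<le> (ri + rj)^3" .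
  have gij: "- gfun ri rj (pi + t) \<ge> ri * rj * sin t / (ri + rj)^3"
    unfolding gfun_def using Pij st ri D_pos[OF ri, of "pi + t"]
    by (simp, intro divide_left_mono) auto
  have "K * sin \<beta> \<le> sin t" unfolding t_def using K0 K1 assms(6,7) by (intro sin_scale) auto
  hence "ri * rj * (K * sin \<beta>) / (ri + rj)^3 \<le> ri * rj * sin t / (ri + rj)^3"
    using ri by (intro divide_right_mono mult_left_mono) auto
  moreover have "ri * rj * (K * sin \<beta>) / (ri + rj)^3 = r1 * r3 * sin \<beta> / (r3 - r1)^3"
    unfolding K_def using ri r13 by (simp add: field_simps)
  ultimately have Fneg: "F (pi + t) < 0" unfolding F_def using gij g13 by linarith
  have Fpi: "F pi > 0" unfolding F_def using g13pos by (simp add: gfun_def[of ri rj])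
  have contF: "continuous_on S F" for S unfolding F_def
    using g_cont[OF ri] by (intro continuous_intros)
  obtain x0 where x0: "pi \<le> x0" "x0 \<le> pi + t" "F x0 = 0"
    using IVT2'[of F "pi + t" 0 pi, OF _ _ _ contF] Fneg Fpi t0 by auto
  have x0lt: "x0 < pi + t" using x0 Fneg by (metis less_eq_real_def less_irrefl)
  define S where "S = {pi..2*pi} \<inter> {x. F x = 0}"
  have x0S: "x0 \<in> S" unfolding S_def using x0 tpi by auto
  have clS: "closed S" unfolding S_def
    by (intro closed_Int closed_atLeastAtMost closed_Collect_eq contF continuous_intros)
  have bS: "bdd_below S" unfolding S_def by (rule bdd_belowI[of _ pi]) auto
  have aS: "Inf S \<in> S" using closed_contains_Inf[OF _ bS clS] x0S by auto
  have aLe: "Inf S \<le> x0" using cInf_lower[OF x0S bS] .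
  show ?thesis
  proof (intro exI conjI)
    show "is_arg_min (\<lambda>x. x) (\<lambda>x. x \<in> {pi..2*pi} \<and> gfun r1 r3 \<beta> + gfun ri rj x = 0) (Inf S)"
    proof -
      have A: "Inf S \<in> {pi..2*pi} \<and> gfun r1 r3 \<beta> + gfun ri rj (Inf S) = 0"
        using aS by (auto simp: S_def F_def)
      have B: "Inf S \<le> y" if "y \<in> {pi..2*pi} \<and> gfun r1 r3 \<beta> + gfun ri rj y = 0" for y
        using cInf_lower[OF _ bS, of y] that by (auto simp: S_def F_def)
      show ?thesis unfolding is_arg_min_def using A B by (auto simp: not_less)
    qed
    show "pi \<le> Inf S" using aS by (auto simp: S_def)
    show "Inf S < pi + (r1 * r3 * (ri + rj)^3) / (ri * rj * (r3 - r1)^3) * \<beta>"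
      using aLe x0lt by (simp add: t_def K_def)
  qed
qed

end
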